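(* Let $a=\sum_{t=0}^7a_te_t\in C\ell_{1,2}$. Then its Moore–Penrose inverse is $$a^+=\begin{cases}0, & \text{if } a=0;\\[2pt] \dfrac{N(a)-2T(a)e_7}{P(a)}\,\bar a, & \text{if } P(a)\neq 0;\\[6pt] \dfrac{a'}{4(a_0^2+a_2^2+a_4^2+a_6^2)}, & \text{if } a\neq 0 \text{ and } P(a)=0.\end{cases}$$
   Context: $C\ell_{1,2}$ is the real Clifford algebra generated by $i_1,i_2,i_3$ with $i_1^2=1$, $i_2^2=i_3^2=-1$ and $i_ti_m=-i_mi_t$ for $t\neq m$, with real basis $e_0=1$, $e_1=i_1$, $e_2=i_2$, $e_3=i_1i_2$, $e_4=i_3$, $e_5=i_1i_3$, $e_6=i_2i_3$, $e_7=i_1i_2i_3$. For $a=\sum_{t=0}^7 a_te_t$ ($a_t\in\mathbb{R}$) define: the conjugate $\bar a=a_0-a_1e_1-a_2e_2-a_3e_3-a_4e_4-a_5e_5-a_6e_6+a_7e_7$; the prime $a'=a_0+a_1e_1-a_2e_2+a_3e_3-a_4e_4+a_5e_5-a_6e_6-a_7e_7$; $N(a)=a_0^2-a_1^2+a_2^2-a_3^2+a_4^2-a_5^2+a_6^2-a_7^2$; $T(a)=a_0a_7+a_2a_5-a_1a_6-a_3a_4$; $P(a)=N(a)^2+4T(a)^2$. For every $a\in C\ell_{1,2}$ there is a unique $x\in C\ell_{1,2}$ with $axa=a$, $xax=x$, $(ax)'=ax$, $(xa)'=xa$; it is called the Moore–Penrose inverse of $a$ and denoted $a^+$. *)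

theory Defs
  imports Main Complex_Main
begin

text \<open>The real Clifford algebra Cl(1,2): an element is given by its 8 real
coordinates with respect to the basis e0 = 1, e1 = i1, e2 = i2, e3 = i1 i2,
e4 = i3, e5 = i1 i3, e6 = i2 i3, e7 = i1 i2 i3.  The product is the bilinear
extension of the product of basis blades determined by i1^2 = 1,
i2^2 = i3^2 = -1 and i_t i_m = - i_m i_t (t ~= m).\<close>

datatype cl12 = Cl (c0: real) (c1: real) (c2: real) (c3: real)
                   (c4: real) (c5: real) (c6: real) (c7: real)

instantiation cl12 :: "{zero, one, plus, minus, uminus, times}"
begin

definition zero_cl12 :: cl12 where "0 = Cl 0 0 0 0 0 0 0 0"
definition one_cl12 :: cl12 where "1 = Cl 1 0 0 0 0 0 0 0"

fun plus_cl12 :: "cl12 \<Rightarrow> cl12 \<Rightarrow> cl12" where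
  "Cl a0 a1 a2 a3 a4 a5 a6 a7 + Cl b0 b1 b2 b3 b4 b5 b6 b7 =
     Cl (a0+b0) (a1+b1) (a2+b2) (a3+b3) (a4+b4) (a5+b5) (a6+b6) (a7+b7)"

fun minus_cl12 :: "cl12 \<Rightarrow> cl12 \<Rightarrow> cl12" where
  "Cl a0 a1 a2 a3 a4 a5 a6 a7 - Cl b0 b1 b2 b3 b4 b5 b6 b7 =
     Cl (a0-b0) (a1-b1) (a2-b2) (a3-b3) (a4-b4) (a5-b5) (a6-b6) (a7-b7)"

fun uminus_cl12 :: "cl12 \<Rightarrow> cl12" where
  "- Cl a0 a1 a2 a3 a4 a5 a6 a7 = Cl (-a0) (-a1) (-a2) (-a3) (-a4) (-a5) (-a6) (-a7)"

fun times_cl12 :: "cl12 \<Rightarrow> cl12 \<Rightarrow> cl12" where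
  "Cl a0 a1 a2 a3 a4 a5 a6 a7 * Cl b0 b1 b2 b3 b4 b5 b6 b7 =
     Cl (a0*b0 + a1*b1 - a2*b2 + a3*b3 - a4*b4 + a5*b5 - a6*b6 - a7*b7)
        (a0*b1 + a1*b0 + a2*b3 - a3*b2 + a4*b5 - a5*b4 - a6*b7 - a7*b6)
        (a0*b2 + a1*b3 + a2*b0 - a3*b1 + a4*b6 - a5*b7 - a6*b4 - a7*b5)
        (a0*b3 + a1*b2 - a2*b1 + a3*b0 - a4*b7 + a5*b6 - a6*b5 - a7*b4)
        (a0*b4 + a1*b5 - a2*b6 + a3*b7 + a4*b0 - a5*b1 + a6*b2 + a7*b3)
        (a0*b5 + a1*b4 + a2*b7 - a3*b6 - a4*b1 + a5*b0 + a6*b3 + a7*b2)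
        (a0*b6 + a1*b7 + a2*b4 - a3*b5 - a4*b2 + a5*b3 + a6*b0 + a7*b1)
        (a0*b7 + a1*b6 - a2*b5 + a3*b4 + a4*b3 - a5*b2 + a6*b1 + a7*b0)"

instance ..
end

fun clscale :: "real \<Rightarrow> cl12 \<Rightarrow> cl12" where
  "clscale r (Cl a0 a1 a2 a3 a4 a5 a6 a7) =
     Cl (r*a0) (r*a1) (r*a2) (r*a3) (r*a4) (r*a5) (r*a6) (r*a7)"

definition e1 :: cl12 where "e1 = Cl 0 1 0 0 0 0 0 0"
definition e2 :: cl12 where "e2 = Cl 0 0 1 0 0 0 0 0"
definition e3 :: cl12 where "e3 = Cl 0 0 0 1 0 0 0 0"
definition e4 :: cl12 where "e4 = Cl 0 0 0 0 1 0 0 0"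
definition e5 :: cl12 where "e5 = Cl 0 0 0 0 0 1 0 0"
definition e6 :: cl12 where "e6 = Cl 0 0 0 0 0 0 1 0"
definition e7 :: cl12 where "e7 = Cl 0 0 0 0 0 0 0 1"

lemma cl12_relations:
  "e1 * e1 = 1" "e2 * e2 = - 1" "e4 * e4 = - 1"
  "e1 * e2 = - (e2 * e1)" "e1 * e4 = - (e4 * e1)" "e2 * e4 = - (e4 * e2)"
  "e3 = e1 * e2" "e5 = e1 * e4" "e6 = e2 * e4" "e7 = e1 * e2 * e4"
  by (simp_all add: e1_def e2_def e3_def e4_def e5_def e6_def e7_def
      one_cl12_def)

lemma cl12_one_mult: "1 * x = x" "x * (1::cl12) = x"
  by (cases x; simp add: one_cl12_def)+

fun clconj :: "cl12 \<Rightarrow> cl12" where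
  "clconj (Cl a0 a1 a2 a3 a4 a5 a6 a7) =
     Cl a0 (-a1) (-a2) (-a3) (-a4) (-a5) (-a6) a7"

fun clprime :: "cl12 \<Rightarrow> cl12" where
  "clprime (Cl a0 a1 a2 a3 a4 a5 a6 a7) =
     Cl a0 a1 (-a2) a3 (-a4) a5 (-a6) (-a7)"

fun clN :: "cl12 \<Rightarrow> real" where
  "clN (Cl a0 a1 a2 a3 a4 a5 a6 a7) =
     a0^2 - a1^2 + a2^2 - a3^2 + a4^2 - a5^2 + a6^2 - a7^2"

fun clT :: "cl12 \<Rightarrow> real" where
  "clT (Cl a0 a1 a2 a3 a4 a5 a6 a7) = a0*a7 + a2*a5 - a1*a6 - a3*a4"

definition clP :: "cl12 \<Rightarrow> real" where
  "clP a = (clN a)^2 + 4 * (clT a)^2"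

definition mpinv :: "cl12 \<Rightarrow> cl12" where
  "mpinv a = (THE x. a * x * a = a \<and> x * a * x = x \<and>
                     clprime (a * x) = a * x \<and> clprime (x * a) = x * a)"

end

theory Submission
  imports Defs
begin

lemma cl_assoc: "(x * y) * z = x * (y * (z::cl12))"
  by (cases x; cases y; cases z; simp add: algebra_simps)

lemma prime_mult: "clprime (x * y) = clprime y * clprime x"
  by (cases x; cases y; simp add: algebra_simps)

lemma prime_prime: "clprime (clprime x) = x"
  by (cases x; simp)

lemma prime_scale: "clprime (clscale r x) = clscale r (clprime x)"
  by (cases x; simp)

lemma scale_mult1: "clscale r x * y = clscale r (x * y)"
  by (cases x; cases y; simp add: algebra_simps)

lemma scale_mult2: "x * clscale r y = clscale r (x * y)"
  by (cases x; cases y; simp add: algebra_simps)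

lemma scale_scale: "clscale r (clscale q x) = clscale (r * q) x"
  by (cases x; simp)

lemma scale_one: "clscale 1 x = x"
  by (cases x; simp)

lemma prime_one: "clprime 1 = 1"
  by (simp add: one_cl12_def)

definition isMP :: "cl12 \<Rightarrow> cl12 \<Rightarrow> bool" where
  "isMP a x \<longleftrightarrow> a * x * a = a \<and> x * a * x = x \<and>
                     clprime (a * x) = a * x \<and> clprime (x * a) = x * a"

lemma mp_unique:
  assumes "isMP a x" "isMP a y" shows "x = y"
proof -
  have 1: "a * x * a = a" "x * a * x = x" "clprime (a * x) = a * x" "clprime (x * a) = x * a"
    using assms(1) unfolding isMP_def by auto
  have 2: "a * y * a = a" "y * a * y = y" "clprime (a * y) = a * y" "clprime (y * a) = y * a"
    using assms(2) unfolding isMP_def by auto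
  have pa1: "clprime a = clprime a * clprime x * clprime a"
  proof -
    have "clprime a = clprime (a * x * a)" using 1 by simp
    also have "\<dots> = clprime a * clprime x * clprime a" by (simp add: prime_mult cl_assoc)
    finally show ?thesis .
  qed
  have pa2: "clprime a = clprime a * clprime y * clprime a"
  proof -
    have "clprime a = clprime (a * y * a)" using 2 by simp
    also have "\<dots> = clprime a * clprime y * clprime a" by (simp add: prime_mult cl_assoc)
    finally show ?thesis .
  qed
  have "x = x * (a * x)" using 1 by (simp add: cl_assoc)
  also have "\<dots> = x * clprime (a * x)" using 1 by simp
  also have "\<dots> = x * clprime x * clprime a" by (simp add: prime_mult cl_assoc)
  also have "\<dots> = x * clprime x * (clprime a * clprime y * clprime a)" using pa2 by simp
  also have "\<dots> = x * clprime (a * x) * clprime (a * y)" by (simp add: prime_mult cl_assoc)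
  also have "\<dots> = x * a * y" using 1 2 by (simp add: cl_assoc)
  finally have A: "x = x * a * y" .
  have "y = (y * a) * y" using 2 by (simp add: cl_assoc)
  also have "\<dots> = clprime (y * a) * y" using 2 by simp
  also have "\<dots> = clprime a * clprime y * y" by (simp add: prime_mult)
  also have "\<dots> = (clprime a * clprime x * clprime a) * clprime y * y" using pa1 by simp
  also have "\<dots> = clprime (x * a) * clprime (y * a) * y" by (simp add: prime_mult cl_assoc)
  also have "\<dots> = x * a * y" using 1 2 by (simp add: cl_assoc)
  finally have B: "y = x * a * y" .
  show ?thesis using A B by simp
qed

lemma mpinv_eq: "isMP a x \<Longrightarrow> mpinv a = x"
  unfolding mpinv_def
  by (rule the_equality) (auto simp: isMP_def[symmetric] intro: mp_unique)

lemma inv_MP: "a * x = 1 \<Longrightarrow> x * a = 1 \<Longrightarrow> isMP a x"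
  unfolding isMP_def by (simp add: cl_assoc cl12_one_mult prime_one)

lemma case2_r:
  "a * ((clscale (clN a) 1 - clscale (2 * clT a) e7) * clconj a) = Cl (clP a) 0 0 0 0 0 0 0"
  by (cases a; simp add: clP_def e7_def one_cl12_def power2_eq_square algebra_simps)

lemma case2_l:
  "((clscale (clN a) 1 - clscale (2 * clT a) e7) * clconj a) * a = Cl (clP a) 0 0 0 0 0 0 0"
  by (cases a; simp add: clP_def e7_def one_cl12_def power2_eq_square algebra_simps)

lemma case3_gen:
  "Cl a0 a1 a2 a3 a4 a5 a6 a7 * clprime (Cl a0 a1 a2 a3 a4 a5 a6 a7) * Cl a0 a1 a2 a3 a4 a5 a6 a7 =
   clscale (4 * (a0^2 + a2^2 + a4^2 + a6^2)) (Cl a0 a1 a2 a3 a4 a5 a6 a7)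
   + clscale (clN (Cl a0 a1 a2 a3 a4 a5 a6 a7)) (Cl (-3*a0) (-a1) (-3*a2) (-a3) (-3*a4) (-a5) (-3*a6) (-a7))
   + clscale (clT (Cl a0 a1 a2 a3 a4 a5 a6 a7)) (Cl (-2*a7) (2*a6) (-2*a5) (2*a4) (2*a3) (-2*a2) (2*a1) (-2*a0))"
  by (simp add: power2_eq_square algebra_simps)

lemma case3_id:
  assumes "clN a = 0" "clT a = 0"
  shows "a * clprime a * a = clscale (4 * ((c0 a)^2 + (c2 a)^2 + (c4 a)^2 + (c6 a)^2)) a"
proof (cases a)
  case (Cl a0 a1 a2 a3 a4 a5 a6 a7)
  have "a * clprime a * a = clscale (4 * ((c0 a)^2 + (c2 a)^2 + (c4 a)^2 + (c6 a)^2)) a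
     + clscale 0 (Cl (-3*a0) (-a1) (-3*a2) (-a3) (-3*a4) (-a5) (-3*a6) (-a7))
     + clscale 0 (Cl (-2*a7) (2*a6) (-2*a5) (2*a4) (2*a3) (-2*a2) (2*a1) (-2*a0))"
    using case3_gen[of a0 a1 a2 a3 a4 a5 a6 a7] assms Cl by simp
  also have "\<dots> = clscale (4 * ((c0 a)^2 + (c2 a)^2 + (c4 a)^2 + (c6 a)^2)) a"
    using Cl by simp
  finally show ?thesis .
qed

theorem theorem3p1:
  fixes a :: cl12
  shows "mpinv a =
    (if a = 0 then 0
     else if clP a \<noteq> 0 then
       clscale (1 / clP a) ((clscale (clN a) 1 - clscale (2 * clT a) e7) * clconj a)
     else clscale (1 / (4 * ((c0 a)^2 + (c2 a)^2 + (c4 a)^2 + (c6 a)^2))) (clprime a))"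
proof (cases "a = 0")
  case True
  then show ?thesis
    by (simp, intro mpinv_eq) (simp add: isMP_def zero_cl12_def)
next
  case F: False
  show ?thesis
  proof (cases "clP a \<noteq> 0")
    case True
    have "isMP a (clscale (1 / clP a) ((clscale (clN a) 1 - clscale (2 * clT a) e7) * clconj a))"
      apply (rule inv_MP)
       apply (simp_all only: scale_mult1 scale_mult2 case2_r case2_l)
      using True by (simp_all add: one_cl12_def)
    then show ?thesis using F True by (simp add: mpinv_eq)
  next
    case False
    then have P0: "clP a = 0" by simp
    have N0: "clN a = 0" and T0: "clT a = 0"
      using P0 unfolding clP_def
      by (smt (verit) zero_le_power2 power2_eq_square zero_less_power2 mult_nonneg_nonneg)+
    define s where "s = 4 * ((c0 a)^2 + (c2 a)^2 + (c4 a)^2 + (c6 a)^2)"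
    have sp: "s \<noteq> 0"
    proof
      assume s0: "s = 0"
      obtain a0 a1 a2 a3 a4 a5 a6 a7 where aa: "a = Cl a0 a1 a2 a3 a4 a5 a6 a7" by (cases a)
      have e: "a0 = 0" "a2 = 0" "a4 = 0" "a6 = 0" using s0 aa unfolding s_def
        by (simp_all add: add_nonneg_eq_0_iff)
      have "a1^2 + a3^2 + a5^2 + a7^2 = 0" using N0 aa e by simp
      then have "a1 = 0" "a3 = 0" "a5 = 0" "a7 = 0"
        by (simp_all add: add_nonneg_eq_0_iff)
      then show False using F aa e by (simp add: zero_cl12_def)
    qed
    have id: "a * clprime a * a = clscale s a" unfolding s_def by (rule case3_id[OF N0 T0])
    have id2: "clprime a * a * clprime a = clscale s (clprime a)"
      using arg_cong[OF id, of clprime] by (simp add: prime_mult prime_scale prime_prime cl_assoc)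
    have "isMP a (clscale (1 / s) (clprime a))"
      unfolding isMP_def
      using id id2 sp
      by (simp add: scale_mult1 scale_mult2 scale_scale prime_scale prime_mult prime_prime scale_one
          cl_assoc[symmetric])
    then show ?thesis using F P0 by (simp add: mpinv_eq s_def)
  qed
qed

end
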